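(* Let $f:\mathbb{R}^n\to\mathbb{R}$ be differentiable, let $g:\mathbb{R}^n\to\mathbb{R}\cup\{+\infty\}$ be proper and convex, $F=f+g$, $F^*=\inf F>-\infty$. For $L>0$ and $p\in\{1,2\}$ and $x\in\mathrm{dom}\,g$ set \[ \mathcal{D}_p(x,L)=-2L\min_{y}\Big\{\nabla f(x)^\top(y-x)+\tfrac{L}{2}\|y-x\|_p^2+g(y)-g(x)\Big\}. \] Let $L_1,L_2>0$ satisfy $L_2/n\le L_1\le L_2$. (i) If $\mu_2>0$ satisfies $\frac12\mathcal{D}_2(x,L_2)\ge\mu_2(F(x)-F^* )$ for all $x\in\mathrm{dom}\,g$, then $\frac12\mathcal{D}_1(x,L_1)\ge\frac{\mu_2}{n}(F(x)-F^* )$ for all $x\in\mathrm{dom}\,g$. (ii) If $\mu_1>0$ satisfies $\frac12\mathcal{D}_1(x,L_1)\ge\mu_1(F(x)-F^* )$ for all $x\in\mathrm{dom}\,g$, then $\frac12\mathcal{D}_2(x,L_2)\ge\mu_1(F(x)-F^* )$ for all $x\in\mathrm{dom}\,g$. Thus the best proximal-PL constants satisfy $\mu_2/n\le\mu_1\le\mu_2$.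
   Context: The inequality $\frac12\mathcal{D}_p(x,L)\ge\mu(F(x)-F^* )$ for all feasible $x$ is the proximal-PL condition in the $p$-norm with constants $L,\mu$; constraints (such as $\sum_m x_m=\gamma$ or bounds) are encoded in $g$ as an indicator function. *)

theory Defs
  imports "HOL-Analysis.Analysis" "HOL-Library.Extended_Real"
begin

definition dom_e :: "('a \<Rightarrow> ereal) \<Rightarrow> 'a set" where
  "dom_e g = {x. g x < \<infinity>}"

definition proper_fun :: "('a \<Rightarrow> ereal) \<Rightarrow> bool" where
  "proper_fun g \<longleftrightarrow> (\<forall>x. g x \<noteq> -\<infinity>) \<and> (\<exists>x. g x < \<infinity>)"

definition convex_ereal :: "('a::real_vector \<Rightarrow> ereal) \<Rightarrow> bool" where
  "convex_ereal g \<longleftrightarrow> (\<forall>x y. \<forall>t::real. 0 \<le> t \<and> t \<le> 1 \<longrightarrow>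
      g ((1 - t) *\<^sub>R x + t *\<^sub>R y) \<le> ereal (1 - t) * g x + ereal t * g y)"

definition pnorm :: "nat \<Rightarrow> real ^ 'n \<Rightarrow> real" where
  "pnorm p v = (if p = 1 then (\<Sum>i\<in>UNIV. \<bar>v $ i\<bar>) else norm v)"

definition Dp :: "(real ^ 'n \<Rightarrow> real ^ 'n) \<Rightarrow> (real ^ 'n \<Rightarrow> ereal) \<Rightarrow> nat
                   \<Rightarrow> real ^ 'n \<Rightarrow> real \<Rightarrow> ereal" where
  "Dp gradf g p x L = - ereal (2 * L) *
     (INF y. ereal (gradf x \<bullet> (y - x) + L / 2 * (pnorm p (y - x))\<^sup>2) + g y - g x)"

end

theory Submission imports Defs begin

lemma ereal_INF_cmult:
  fixes B :: "'a \<Rightarrow> ereal"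
  assumes "c > 0"
  shows "ereal c * (INF y. B y) = (INF y. ereal c * B y)"
proof -
  have "(INF y. ereal c * B y) = Inf {ereal c * x |x. x \<in> range B}" 
    by (rule arg_cong[where f=Inf]) auto
  also have "\<dots> = ereal c * Inf {x. x \<in> range B}" by (rule ereal_Inf_cmult[OF assms])
  finally show ?thesis by simp
qed

lemma pnorm_scale: "t \<ge> 0 \<Longrightarrow> p \<in> {1,2} \<Longrightarrow> pnorm p (t *\<^sub>R d) = t * pnorm p d"
  by (auto simp: pnorm_def sum_distrib_left abs_mult)

lemma pnorm12: "pnorm 2 d \<le> pnorm 1 d"
  by (simp add: pnorm_def norm_le_l1_cart)

lemma pnorm_sq: "(pnorm 1 d)\<^sup>2 \<le> real CARD('n) * (pnorm 2 (d::real^'n))\<^sup>2"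
proof -
  have "(pnorm 2 d)\<^sup>2 = d \<bullet> d" by (simp add: pnorm_def power2_norm_eq_inner)
  also have "\<dots> = (\<Sum>i\<in>UNIV. \<bar>d$i\<bar>\<^sup>2)"
    by (simp add: inner_vec_def power2_eq_square)
  finally have e: "(pnorm 2 d)\<^sup>2 = (\<Sum>i\<in>UNIV. \<bar>d$i\<bar>\<^sup>2)" .
  have "(\<Sum>i\<in>UNIV. \<bar>d$i\<bar>)\<^sup>2 \<le> (\<Sum>i\<in>UNIV. \<bar>d$i\<bar>\<^sup>2) * card (UNIV::'n set)"
    by (rule sum_squared_le_sum_of_squares)
  then show ?thesis unfolding pnorm_def using e by (simp add: pnorm_def mult.commute)
qed

lemma cmp:
  fixes g :: "real^'n \<Rightarrow> ereal"
  assumes gx: "g x = ereal c" and gnm: "\<And>y. g y \<noteq> -\<infinity>" and cvx: "convex_ereal g"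
    and a: "\<alpha> > 0" and b: "\<beta> > 0" and t1: "\<beta> / \<alpha> \<le> 1"
    and quad: "\<And>d::real^'n. \<alpha> * (Lp/2 * (pnorm p ((\<beta>/\<alpha>) *\<^sub>R d))\<^sup>2) \<le> \<beta> * (Lq/2*(pnorm q d)\<^sup>2)"
  shows "ereal \<alpha> * (INF y. ereal (gradf x \<bullet> (y - x) + Lp / 2 * (pnorm p (y - x))\<^sup>2) + g y - g x)
       \<le> ereal \<beta> * (INF y. ereal (gradf x \<bullet> (y - x) + Lq / 2 * (pnorm q (y - x))\<^sup>2) + g y - g x)"
proof -
  define t where "t = \<beta>/\<alpha>"
  have t0: "t > 0" using a b by (simp add: t_def)
  have tle: "t \<le> 1" using t1 by (simp add: t_def)
  have at: "\<alpha> * t = \<beta>" using a by (simp add: t_def)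
  have "ereal \<alpha> * (INF y. ereal (gradf x \<bullet> (y - x) + Lp / 2 * (pnorm p (y - x))\<^sup>2) + g y - g x)
       \<le> ereal \<beta> * (ereal (gradf x \<bullet> (y - x) + Lq / 2 * (pnorm q (y - x))\<^sup>2) + g y - g x)" for y
  proof (cases "g y")
    case PInf
    then show ?thesis using gx b by simp
  next
    case MInf
    then show ?thesis using gnm by simp
  next
    case (real bb)
    define y' where "y' = (1-t) *\<^sub>R x + t *\<^sub>R y"
    have "g y' \<le> ereal (1-t) * g x + ereal t * g y" using cvx t0 tle unfolding convex_ereal_def y'_def by auto
    hence "g y' \<le> ereal ((1-t)*c + t*bb)" using gx real by simp
    then obtain b' where gy': "g y' = ereal b'" and b'le: "b' \<le> (1-t)*c+t*bb" using gnm[of y'] by (cases "g y'") auto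
    have d: "y' - x = t *\<^sub>R (y - x)" by (simp add: y'_def algebra_simps)
    have "ereal \<alpha> * (INF y. ereal (gradf x \<bullet> (y - x) + Lp / 2 * (pnorm p (y - x))\<^sup>2) + g y - g x)
        \<le> ereal \<alpha> * (ereal (gradf x \<bullet> (y' - x) + Lp / 2 * (pnorm p (y' - x))\<^sup>2) + g y' - g x)"
      by (rule ereal_mult_left_mono) (auto intro: INF_lower simp: less_imp_le[OF a])
    also have "\<dots> = ereal (\<alpha> * (gradf x \<bullet> (t *\<^sub>R (y - x)) + Lp / 2 * (pnorm p (t *\<^sub>R (y - x)))\<^sup>2 + b' - c))"
      using gy' gx d by simp
    also have "\<dots> \<le> ereal (\<beta> * (gradf x \<bullet> (y - x) + Lq / 2 * (pnorm q (y - x))\<^sup>2 + bb - c))"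
    proof -
      have 1: "\<alpha> * (gradf x \<bullet> (t *\<^sub>R (y - x))) = \<beta> * (gradf x \<bullet> (y - x))"
        using at by (simp add: inner_scaleR_right)
      have 2: "\<alpha> * (b' - c) \<le> \<beta> * (bb - c)"
      proof -
        have "\<alpha> * (b' - c) \<le> \<alpha> * (t * (bb - c))"
          using b'le a by (intro mult_left_mono) (auto simp: algebra_simps)
        then show ?thesis using at by (simp add: mult.assoc[symmetric])
      qed
      have 3: "\<alpha> * (Lp/2 * (pnorm p (t *\<^sub>R (y-x)))\<^sup>2) \<le> \<beta> * (Lq/2*(pnorm q (y-x))\<^sup>2)"
        using quad[of "y - x"] by (simp add: t_def)
      show ?thesis using 1 2 3 by (simp add: algebra_simps)
    qed
    also have "\<dots> = ereal \<beta> * (ereal (gradf x \<bullet> (y - x) + Lq / 2 * (pnorm q (y - x))\<^sup>2) + g y - g x)"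
      using real gx by simp
    finally show ?thesis .
  qed
  hence "ereal \<alpha> * (INF y. ereal (gradf x \<bullet> (y - x) + Lp / 2 * (pnorm p (y - x))\<^sup>2) + g y - g x)
       \<le> (INF y. ereal \<beta> * (ereal (gradf x \<bullet> (y - x) + Lq / 2 * (pnorm q (y - x))\<^sup>2) + g y - g x))"
    by (rule INF_greatest)
  then show ?thesis by (simp add: ereal_INF_cmult b)
qed

theorem lemmaC1:
  fixes f :: "real ^ 'n \<Rightarrow> real"
    and gradf :: "real ^ 'n \<Rightarrow> real ^ 'n"
    and g :: "real ^ 'n \<Rightarrow> ereal"
    and L1 L2 :: real
  assumes grad: "\<And>x. GDERIV f x :> gradf x"
    and proper: "proper_fun g"
    and convex: "convex_ereal g"
    and Fstar_fin: "(INF x. ereal (f x) + g x) > -\<infinity>"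
    and L1pos: "L1 > 0" and L2pos: "L2 > 0"
    and L21: "L2 / real CARD('n) \<le> L1" and L12: "L1 \<le> L2"
  shows "(\<forall>mu2>0. (\<forall>x\<in>dom_e g. ereal (1/2) * Dp gradf g 2 x L2
                        \<ge> ereal mu2 * (ereal (f x) + g x - (INF z. ereal (f z) + g z)))
            \<longrightarrow> (\<forall>x\<in>dom_e g. ereal (1/2) * Dp gradf g 1 x L1
                        \<ge> ereal (mu2 / real CARD('n)) * (ereal (f x) + g x - (INF z. ereal (f z) + g z))))
       \<and> (\<forall>mu1>0. (\<forall>x\<in>dom_e g. ereal (1/2) * Dp gradf g 1 x L1
                        \<ge> ereal mu1 * (ereal (f x) + g x - (INF z. ereal (f z) + g z)))
            \<longrightarrow> (\<forall>x\<in>dom_e g. ereal (1/2) * Dp gradf g 2 x L2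
                        \<ge> ereal mu1 * (ereal (f x) + g x - (INF z. ereal (f z) + g z))))"
proof -
  let ?Fs = "INF z. ereal (f z) + g z"
  define n where "n = real CARD('n)"
  have npos: "n > 0" by (simp add: n_def)
  define I where "I p L x = (INF y. ereal (gradf x \<bullet> (y - x) + L / 2 * (pnorm p (y - x))\<^sup>2) + g y - g x)" for p L x
  have D: "Dp gradf g p x L = ereal (-2*L) * I p L x" for p x L by (simp add: Dp_def I_def)
  have gnm: "\<And>y. g y \<noteq> -\<infinity>" using proper by (simp add: proper_fun_def)
  have fin: "\<exists>c. g x = ereal c \<and> I p L x \<le> 0 \<and> ereal (f x) + g x - ?Fs = ereal (f x + c - real_of_ereal ?Fs)" if "x \<in> dom_e g" for x p L
  proof -
    have "g x < \<infinity>" using that by (simp add: dom_e_def)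
    then obtain c where c: "g x = ereal c" using gnm[of x] by (cases "g x") auto
    have "I p L x \<le> ereal (gradf x \<bullet> (x - x) + L / 2 * (pnorm p (x - x))\<^sup>2) + g x - g x"
      unfolding I_def by (rule INF_lower) simp
    also have "\<dots> = 0" using c by (simp add: pnorm_def)
    finally have "I p L x \<le> 0" .
    moreover have "?Fs \<le> ereal (f x) + g x" by (rule INF_lower) simp
    then have "?Fs = ereal (real_of_ereal ?Fs)" using Fstar_fin c by (cases ?Fs) auto
    ultimately show ?thesis using c by (metis ereal_minus(1) plus_ereal.simps(1))
  qed
  have cmp1: "ereal (n*L1) * I 1 L1 x \<le> ereal L2 * I 2 L2 x" if xx: "x \<in> dom_e g" for x
  proof -
    obtain c where c: "g x = ereal c" using fin[OF xx] by blast
    show ?thesis unfolding I_def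
    proof (rule cmp[OF c gnm convex])
      show "0 < n * L1" using npos L1pos by simp
      show "0 < L2" by fact
      show "L2 / (n * L1) \<le> 1" using L21 npos L1pos by (simp add: n_def field_simps)
      fix d :: "real^'n"
      have "n * L1 * (L1 / 2 * (pnorm 1 ((L2 / (n * L1)) *\<^sub>R d))\<^sup>2) = L2 * L2 / 2 * ((pnorm 1 d)\<^sup>2 / n)"
        using npos L1pos L2pos by (simp add: pnorm_scale power_mult_distrib field_simps power2_eq_square)
      also have "\<dots> \<le> L2 * L2 / 2 * (pnorm 2 d)\<^sup>2"
        using pnorm_sq[of d] npos L2pos by (intro mult_left_mono) (auto simp: n_def field_simps)
      finally show "n * L1 * (L1 / 2 * (pnorm 1 ((L2 / (n * L1)) *\<^sub>R d))\<^sup>2) \<le> L2 * (L2 / 2 * (pnorm 2 d)\<^sup>2)"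
        by simp
    qed
  qed
  have cmp2: "ereal L2 * I 2 L2 x \<le> ereal L1 * I 1 L1 x" if xx: "x \<in> dom_e g" for x
  proof -
    obtain c where c: "g x = ereal c" using fin[OF xx] by blast
    show ?thesis unfolding I_def
    proof (rule cmp[OF c gnm convex])
      show "0 < L2" by fact
      show "0 < L1" by fact
      show "L1 / L2 \<le> 1" using L12 L2pos by simp
      fix d :: "real^'n"
      have "L2 * (L2 / 2 * (pnorm 2 ((L1 / L2) *\<^sub>R d))\<^sup>2) = L1 * L1 / 2 * (pnorm 2 d)\<^sup>2"
        using L1pos L2pos by (simp add: pnorm_scale power_mult_distrib field_simps power2_eq_square)
      also have "\<dots> \<le> L1 * L1 / 2 * (pnorm 1 d)\<^sup>2"
        using pnorm12[of d] L1pos by (intro mult_left_mono power_mono) (auto simp: pnorm_def)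
      finally show "L2 * (L2 / 2 * (pnorm 2 ((L1 / L2) *\<^sub>R d))\<^sup>2) \<le> L1 * (L1 / 2 * (pnorm 1 d)\<^sup>2)"
        by simp
    qed
  qed
  show ?thesis
  proof (intro conjI allI impI ballI)
    fix mu2 :: real and x
    assume mu: "mu2 > 0" and H: "\<forall>x\<in>dom_e g. ereal (1/2) * Dp gradf g 2 x L2 \<ge> ereal mu2 * (ereal (f x) + g x - ?Fs)"
      and x: "x \<in> dom_e g"
    obtain c where c: "g x = ereal c" and I1: "I 1 L1 x \<le> 0" and dl: "ereal (f x) + g x - ?Fs = ereal (f x + c - real_of_ereal ?Fs)"
      using fin[OF x] by blast
    have I2: "I 2 L2 x \<le> 0" using fin[OF x] by blast
    have Hx: "ereal (1/2) * (ereal (-2*L2) * I 2 L2 x) \<ge> ereal mu2 * ereal (f x + c - real_of_ereal ?Fs)"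
      using H x dl D by metis
    show "ereal (1/2) * Dp gradf g 1 x L1 \<ge> ereal (mu2 / real CARD('n)) * (ereal (f x) + g x - ?Fs)"
    proof (cases "I 1 L1 x")
      case (real r1)
      have c1: "ereal (n*L1) * ereal r1 \<le> ereal L2 * I 2 L2 x" using cmp1[OF x] real by simp
      then obtain r2 where r2: "I 2 L2 x = ereal r2" using I2 L2pos by (cases "I 2 L2 x") auto
      have "n*L1*r1 \<le> L2*r2" using c1 r2 by simp
      moreover have "-L2*r2 \<ge> mu2 * (f x + c - real_of_ereal ?Fs)" using Hx r2 by simp
      ultimately have "-L1*r1 \<ge> mu2 / n * (f x + c - real_of_ereal ?Fs)"
        using npos by (simp add: field_simps)
      then show ?thesis using dl real D by (simp add: n_def)
    next
      case PInf then show ?thesis using I1 by simp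
    next
      case MInf then show ?thesis using D L1pos by simp
    qed
  next
    fix mu1 :: real and x
    assume mu: "mu1 > 0" and H: "\<forall>x\<in>dom_e g. ereal (1/2) * Dp gradf g 1 x L1 \<ge> ereal mu1 * (ereal (f x) + g x - ?Fs)"
      and x: "x \<in> dom_e g"
    obtain c where c: "g x = ereal c" and I1: "I 1 L1 x \<le> 0" and dl: "ereal (f x) + g x - ?Fs = ereal (f x + c - real_of_ereal ?Fs)"
      using fin[OF x] by blast
    have I2: "I 2 L2 x \<le> 0" using fin[OF x] by blast
    have Hx: "ereal (1/2) * (ereal (-2*L1) * I 1 L1 x) \<ge> ereal mu1 * ereal (f x + c - real_of_ereal ?Fs)"
      using H x dl D by metis
    show "ereal (1/2) * Dp gradf g 2 x L2 \<ge> ereal mu1 * (ereal (f x) + g x - ?Fs)"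
    proof (cases "I 2 L2 x")
      case (real r2)
      have c1: "ereal L2 * ereal r2 \<le> ereal L1 * I 1 L1 x" using cmp2[OF x] real by simp
      then obtain r1 where r1: "I 1 L1 x = ereal r1" using I1 L1pos by (cases "I 1 L1 x") auto
      have "L2*r2 \<le> L1*r1" using c1 r1 by simp
      moreover have "-L1*r1 \<ge> mu1 * (f x + c - real_of_ereal ?Fs)" using Hx r1 by simp
      ultimately have "-L2*r2 \<ge> mu1 * (f x + c - real_of_ereal ?Fs)" by simp
      then show ?thesis using dl real D by simp
    next
      case PInf then show ?thesis using I2 by simp
    next
      case MInf then show ?thesis using D L2pos by simp
    qed
  qed
qed

end
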